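(* For every integer $k\ge1$ there is a constant $C>0$ such that for every $r\ge1$ and every non-negative $C^2$ function $u$ on the disk $D_r=\{z\in\mathbb C:|z|<r\}$ satisfying $\Delta u=2(e^u-e^{(1-k)u})$, one has $u(0)\le C/r^2$.
   Context: $\Delta=\partial_x^2+\partial_y^2$ is the Euclidean Laplacian. *)

theory Defs
  imports "HOL-Analysis.Analysis"
begin

text \<open>Functions on the plane are modelled as functions on complex numbers.
  dirderiv v u z is the derivative of u at z in the (real) direction v;
  partial derivatives are dirderiv 1 (d/dx) and dirderiv i (d/dy).\<close>

definition dirderiv :: "complex \<Rightarrow> (complex \<Rightarrow> real) \<Rightarrow> complex \<Rightarrow> real" where
  "dirderiv v u z = deriv (\<lambda>t::real. u (z + of_real t * v)) 0"

definition C2_on :: "complex set \<Rightarrow> (complex \<Rightarrow> real) \<Rightarrow> bool" where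
  "C2_on S u \<longleftrightarrow>
     continuous_on S u \<and>
     (\<forall>v\<in>{1, \<i>}. (\<forall>z\<in>S. (\<lambda>t::real. u (z + of_real t * v)) differentiable (at 0))
        \<and> continuous_on S (dirderiv v u)) \<and>
     (\<forall>v\<in>{1, \<i>}. \<forall>w\<in>{1, \<i>}.
        (\<forall>z\<in>S. (\<lambda>t::real. dirderiv v u (z + of_real t * w)) differentiable (at 0))
        \<and> continuous_on S (dirderiv w (dirderiv v u)))"

definition laplacian :: "(complex \<Rightarrow> real) \<Rightarrow> complex \<Rightarrow> real" where
  "laplacian u z = dirderiv 1 (dirderiv 1 u) z + dirderiv \<i> (dirderiv \<i> u) z"

end

theory Submission
  imports Defs
begin

lemma deriv_shift0: "deriv (\<lambda>s. f (s + t)) 0 = deriv f t" for f :: "real \<Rightarrow> real"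
  unfolding deriv_def using DERIV_shift[of f _ 0 t] by simp

lemma second_deriv_max:
  fixes h g g1 :: "real \<Rightarrow> real"
  assumes d: "\<delta> > 0"
    and hd: "\<And>t. \<bar>t\<bar> < \<delta> \<Longrightarrow> h differentiable (at t)"
    and h2: "(deriv h has_real_derivative h2) (at 0)"
    and gd: "\<And>t. \<bar>t\<bar> < \<delta> \<Longrightarrow> (g has_real_derivative g1 t) (at t)"
    and g2: "(g1 has_real_derivative g2) (at 0)"
    and mx: "\<And>t. \<bar>t\<bar> < \<delta> \<Longrightarrow> h t - g t \<le> h 0 - g 0"
  shows "h2 \<le> g2"
proof (rule ccontr)
  assume "\<not> h2 \<le> g2"
  hence pos: "h2 - g2 > 0" by simp
  define p where "p = (\<lambda>t. deriv h t - g1 t)"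
  have phid: "((\<lambda>t. h t - g t) has_real_derivative p t) (at t)" if "\<bar>t\<bar> < \<delta>" for t
    unfolding p_def using hd[OF that] gd[OF that]
    by (intro DERIV_diff) (auto simp: DERIV_deriv_iff_real_differentiable)
  have p0: "p 0 = 0"
    using DERIV_local_max[OF phid[of 0] d] mx d by auto
  have "(p has_real_derivative h2 - g2) (at 0)"
    unfolding p_def using h2 g2 by (intro DERIV_diff)
  from DERIV_pos_inc_right[OF this pos] obtain e where e: "e > 0" "\<And>s. s > 0 \<Longrightarrow> s < e \<Longrightarrow> p 0 < p (0 + s)"
    by blast
  define t where "t = min e \<delta> / 2"
  have t: "t > 0" "t < e" "t < \<delta>" using e d by (auto simp: t_def)
  obtain xi where xi: "0 < xi" "xi < t" "(h t - g t) - (h 0 - g 0) = (t - 0) * p xi"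
    using MVT2[of 0 t "\<lambda>t. h t - g t" p] phid t by auto
  have "p xi > 0" using e(2)[of xi] xi t p0 by auto
  hence "(h t - g t) - (h 0 - g 0) > 0" using xi t by simp
  with mx[of t] t show False by auto
qed

lemma line_facts:
  assumes C2: "C2_on S u" and v: "v \<in> {1, \<i>}" and z0: "z0 \<in> S"
    and inS: "\<And>t. \<bar>t\<bar> < \<delta> \<Longrightarrow> z0 + of_real t * v \<in> S"
  shows "\<And>t. \<bar>t\<bar> < \<delta> \<Longrightarrow> (\<lambda>t. u (z0 + of_real t * v)) differentiable (at t)"
    and "(deriv (\<lambda>t. u (z0 + of_real t * v)) has_real_derivative dirderiv v (dirderiv v u) z0) (at 0)"
proof -
  define h where "h = (\<lambda>t. u (z0 + of_real t * v))"
  have eq: "(\<lambda>s. u (z0 + of_real t * v + of_real s * v)) = (\<lambda>s. h (s + t))" for t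
    by (simp add: h_def algebra_simps)
  have dd: "dirderiv v u (z0 + of_real t * v) = deriv h t" for t
    unfolding dirderiv_def eq deriv_shift0 ..
  have dh: "(\<lambda>t. dirderiv v u (z0 + of_real t * v)) = deriv h"
    using dd by auto
  show "h differentiable (at t)" if "\<bar>t\<bar> < \<delta>" for t
  proof -
    have "(\<lambda>s. u (z0 + of_real t * v + of_real s * v)) differentiable (at 0)"
      using C2 v inS[OF that] unfolding C2_on_def by blast
    then obtain D where "((\<lambda>s. h (s + t)) has_real_derivative D) (at 0)"
      unfolding eq by (auto elim: real_differentiableE)
    hence "(h has_real_derivative D) (at t)"
      using DERIV_shift[of h D 0 t] by simp
    thus ?thesis by (auto simp: real_differentiable_def)
  qed
  have "(\<lambda>t. dirderiv v u (z0 + of_real t * v)) differentiable (at 0)"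
    using C2 v z0 unfolding C2_on_def by blast
  hence "deriv h differentiable (at 0)" unfolding dh .
  hence "(deriv h has_real_derivative deriv (deriv h) 0) (at 0)"
    by (simp add: DERIV_deriv_iff_real_differentiable)
  moreover have "dirderiv v (dirderiv v u) z0 = deriv (deriv h) 0"
    unfolding dirderiv_def[of v "dirderiv v u"] using dh by simp
  ultimately show "(deriv h has_real_derivative dirderiv v (dirderiv v u) z0) (at 0)" by simp
qed

lemma inv_sq_deriv:
  fixes q :: "real \<Rightarrow> real"
  assumes "(q has_real_derivative q') (at t)" "q t \<noteq> 0"
  shows "((\<lambda>t. A / (q t)\<^sup>2) has_real_derivative -2 * A * q' / (q t) ^ 3) (at t)"
  using assms
  apply (auto intro!: derivative_eq_intros)
  apply (simp add: field_simps eval_nat_numeral)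
  done

lemma inv_cube_deriv:
  fixes q p :: "real \<Rightarrow> real"
  assumes "(q has_real_derivative q') (at t)" "q t \<noteq> 0" "(p has_real_derivative p') (at t)"
  shows "((\<lambda>t. p t / (q t) ^ 3) has_real_derivative (p' * q t - 3 * p t * q') / (q t) ^ 4) (at t)"
  using assms
  apply (auto intro!: derivative_eq_intros)
  apply (simp add: field_simps eval_nat_numeral)
  done

lemma barrier_d1:
  fixes A rho a b :: real
  assumes "rho - (a + t)\<^sup>2 - b\<^sup>2 > 0"
  shows "((\<lambda>t. A / (rho - (a + t)\<^sup>2 - b\<^sup>2)\<^sup>2) has_real_derivative
          4 * A * (a + t) / (rho - (a + t)\<^sup>2 - b\<^sup>2) ^ 3) (at t)"
proof -
  have q: "((\<lambda>t. rho - (a + t)\<^sup>2 - b\<^sup>2) has_real_derivative -2 * (a + t)) (at t)"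
    by (auto intro!: derivative_eq_intros)
  show ?thesis
    by (rule DERIV_cong[OF inv_sq_deriv[OF q, of A]]) (use assms in \<open>auto simp: field_simps\<close>)
qed

lemma barrier_d2:
  fixes A rho a b :: real
  assumes "rho - a\<^sup>2 - b\<^sup>2 > 0"
  shows "((\<lambda>t. 4 * A * (a + t) / (rho - (a + t)\<^sup>2 - b\<^sup>2) ^ 3) has_real_derivative
          (4 * A * (rho - a\<^sup>2 - b\<^sup>2) + 24 * A * a\<^sup>2) / (rho - a\<^sup>2 - b\<^sup>2) ^ 4) (at 0)"
proof -
  have q: "((\<lambda>t. rho - (a + t)\<^sup>2 - b\<^sup>2) has_real_derivative -2 * (a + 0)) (at 0)"
    by (auto intro!: derivative_eq_intros)
  have p: "((\<lambda>t. 4 * A * (a + t)) has_real_derivative 4 * A) (at 0)"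
    by (auto intro!: derivative_eq_intros)
  show ?thesis
    by (rule DERIV_cong[OF inv_cube_deriv[OF q _ p]]) (use assms in \<open>auto simp: field_simps power2_eq_square\<close>)
qed


lemma pde_lower:
  fixes U :: real and k :: nat
  assumes "k \<ge> 1" "U \<ge> 0"
  shows "U\<^sup>2 \<le> 2 * (exp U - exp ((1 - real k) * U))"
proof -
  define E where "E = exp ((1 - real k) * U)"
  have "(1 - real k) * U \<le> 0" using assms by (simp add: mult_nonpos_nonneg)
  hence a: "E \<le> 1" by (simp add: E_def)
  have b: "1 + U + U\<^sup>2 / 2 \<le> exp U" using exp_lower_Taylor_quadratic assms(2) by blast
  have "U\<^sup>2 \<le> 2 * exp U - 2 * E" using a b assms(2) by linarith
  thus ?thesis by (simp add: E_def algebra_simps)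
qed

lemma main_bound:
  fixes k :: nat and u :: "complex \<Rightarrow> real"
  assumes k: "k \<ge> 1" and r': "0 < r'" "r' < r"
    and C2: "C2_on (ball 0 r) u" and nn: "\<forall>z\<in>ball 0 r. u z \<ge> 0"
    and pde: "\<forall>z\<in>ball 0 r. laplacian u z = 2 * (exp (u z) - exp ((1 - real k) * u z))"
  shows "u 0 \<le> 24 / r'\<^sup>2"
proof (rule ccontr)
  assume "\<not> u 0 \<le> 24 / r'\<^sup>2"
  hence u0: "u 0 > 24 / r'\<^sup>2" by simp
  define rho where "rho = r'\<^sup>2"
  define A where "A = 24 * rho"
  define W where "W = (\<lambda>z. A / (rho - (Re z)\<^sup>2 - (Im z)\<^sup>2)\<^sup>2)"
  have rho: "rho > 0" using r' by (simp add: rho_def)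
  have A: "A > 0" using rho by (simp add: A_def)
  have nz: "(Re z)\<^sup>2 + (Im z)\<^sup>2 = (norm z)\<^sup>2" for z by (simp add: cmod_power2)
  have W0: "W 0 = 24 / r'\<^sup>2" by (simp add: W_def A_def rho_def power2_eq_square)
  define d where "d = u 0 - W 0"
  have d: "d > 0" using u0 W0 by (simp add: d_def)
  have cont: "continuous_on (ball 0 r) u" using C2 by (simp add: C2_on_def)
  have sub: "cball 0 r' \<subseteq> ball 0 r" using r' by auto
  obtain zM where zM: "zM \<in> cball 0 r'" "\<And>z. z \<in> cball 0 r' \<Longrightarrow> u z \<le> u zM"
    using continuous_attains_sup[OF compact_cball _ continuous_on_subset[OF cont sub]] r'
    by auto
  define M where "M = u zM"
  have Mu: "\<And>z. z \<in> cball 0 r' \<Longrightarrow> u z \<le> M" using zM by (simp add: M_def)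
  have "u 0 \<le> M" using Mu r' by simp
  moreover have "u 0 > 0" using u0 r' by (smt (verit) divide_pos_pos zero_less_power)
  ultimately have M: "M > 0" by simp
  define e where "e = min (rho / 2) (sqrt (A / M))"
  have e: "e > 0" "e \<le> rho / 2" "e \<le> sqrt (A / M)" using rho A M by (auto simp: e_def)
  define r1 where "r1 = sqrt (rho - e)"
  have r1: "r1 > 0" "r1\<^sup>2 = rho - e" using e by (auto simp: r1_def)
  have out: "u z - W z \<le> 0" if "r1 < norm z" "norm z < r'" for z
  proof -
    define Q where "Q = rho - (norm z)\<^sup>2"
    have "(norm z)\<^sup>2 < rho" unfolding rho_def using that r1 by (simp add: power_strict_mono)
    hence Q0: "Q > 0" by (simp add: Q_def)
    have "r1\<^sup>2 < (norm z)\<^sup>2" using that r1 by (intro power_strict_mono) auto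
    hence Qe: "Q < e" using r1 by (simp add: Q_def)
    have "Q\<^sup>2 \<le> e\<^sup>2" using Q0 Qe by (simp add: power_mono)
    also have "\<dots> \<le> A / M" using e A M
      by (metis (no_types, lifting) divide_pos_pos less_le power_mono real_sqrt_pow2 real_sqrt_ge_zero)
    finally have QA: "Q\<^sup>2 \<le> A / M" .
    have "M \<le> A / Q\<^sup>2" using QA Q0 M A by (simp add: field_simps)
    moreover have "W z = A / Q\<^sup>2" unfolding W_def Q_def
      by (simp add: cmod_power2 algebra_simps)
    moreover have "u z \<le> M" using Mu that by simp
    ultimately show ?thesis by simp
  qed
  have r1r': "r1 < r'"
  proof -
    have "r1\<^sup>2 < r'\<^sup>2" using r1 e by (simp add: rho_def)
    thus ?thesis using r' r1 by (smt (verit) power_mono)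
  qed
  have Wden: "rho - (Re z)\<^sup>2 - (Im z)\<^sup>2 > 0" if "norm z < r'" for z
  proof -
    have "(norm z)\<^sup>2 < r'\<^sup>2" using that by (simp add: power_strict_mono)
    thus ?thesis using nz[of z] by (simp add: rho_def)
  qed
  have contphi: "continuous_on (cball 0 r1) (\<lambda>z. u z - W z)"
  proof (intro continuous_intros)
    show "continuous_on (cball 0 r1) u"
    proof (rule continuous_on_subset[OF cont])
      show "cball 0 r1 \<subseteq> ball 0 r" using r1r' r' by auto
    qed
    show "continuous_on (cball 0 r1) W"
    proof -
      have "rho - (Re z)\<^sup>2 - (Im z)\<^sup>2 \<noteq> 0" if "z \<in> cball 0 r1" for z
        using Wden[of z] that r1r' by force
      thus ?thesis unfolding W_def by (auto intro!: continuous_intros)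
    qed
  qed
  obtain z0 where z0: "z0 \<in> cball 0 r1" "\<And>z. z \<in> cball 0 r1 \<Longrightarrow> u z - W z \<le> u z0 - W z0"
    using continuous_attains_sup[OF compact_cball _ contphi] r1 by auto
  have phi0: "u z0 - W z0 \<ge> d" using z0(2)[of 0] r1 by (simp add: d_def)
  have z0b: "norm z0 < r'" using z0 r1r' by auto
  have mx: "u z - W z \<le> u z0 - W z0" if "norm z < r'" for z
  proof (cases "norm z \<le> r1")
    case True thus ?thesis using z0 by auto
  next
    case False thus ?thesis using out[of z] that phi0 d by auto
  qed
  define \<delta> where "\<delta> = r' - norm z0"
  have \<delta>: "\<delta> > 0" using z0b by (simp add: \<delta>_def)
  have inb: "norm (z0 + of_real t * v) < r'" if "\<bar>t\<bar> < \<delta>" "norm v = 1" for t v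
  proof -
    have "norm (z0 + of_real t * v) \<le> norm z0 + \<bar>t\<bar>"
      using norm_triangle_ineq[of z0 "of_real t * v"] that by (simp add: norm_mult)
    thus ?thesis using that by (simp add: \<delta>_def)
  qed
  have inS: "z0 + of_real t * v \<in> ball 0 r" if "\<bar>t\<bar> < \<delta>" "norm v = 1" for t v
    using inb[OF that] r' by simp
  have z0S: "z0 \<in> ball 0 r" using z0b r' by simp
  define x where "x = Re z0"
  define y where "y = Im z0"
  define Q where "Q = rho - x\<^sup>2 - y\<^sup>2"
  have Q: "Q > 0" using Wden[OF z0b] by (simp add: Q_def x_def y_def)
  have D1: "dirderiv 1 (dirderiv 1 u) z0 \<le> (4 * A * Q + 24 * A * x\<^sup>2) / Q ^ 4"
  proof (rule second_deriv_max[OF \<delta>])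
    show "\<And>t. \<bar>t\<bar> < \<delta> \<Longrightarrow> (\<lambda>t. u (z0 + of_real t * 1)) differentiable (at t)"
      by (rule line_facts(1)[OF C2 _ z0S]) (use inS[of _ 1] in auto)
    show "(deriv (\<lambda>t. u (z0 + of_real t * 1)) has_real_derivative dirderiv 1 (dirderiv 1 u) z0) (at 0)"
      by (rule line_facts(2)[where \<delta>=\<delta>, OF C2 _ z0S]) (use inS[of _ 1] in auto)
    show "((\<lambda>t. A / (rho - (x + t)\<^sup>2 - y\<^sup>2)\<^sup>2) has_real_derivative
          4 * A * (x + t) / (rho - (x + t)\<^sup>2 - y\<^sup>2) ^ 3) (at t)" if "\<bar>t\<bar> < \<delta>" for t
    proof (rule barrier_d1)
      show "rho - (x + t)\<^sup>2 - y\<^sup>2 > 0"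
        using Wden[OF inb[OF that, of 1]] by (simp add: x_def y_def)
    qed
    show "((\<lambda>t. 4 * A * (x + t) / (rho - (x + t)\<^sup>2 - y\<^sup>2) ^ 3) has_real_derivative
          (4 * A * Q + 24 * A * x\<^sup>2) / Q ^ 4) (at 0)"
      unfolding Q_def by (rule barrier_d2) (use Q in \<open>simp add: Q_def\<close>)
    show "u (z0 + of_real t * 1) - A / (rho - (x + t)\<^sup>2 - y\<^sup>2)\<^sup>2
          \<le> u (z0 + of_real 0 * 1) - A / (rho - (x + 0)\<^sup>2 - y\<^sup>2)\<^sup>2" if "\<bar>t\<bar> < \<delta>" for t
      using mx[OF inb[OF that, of 1]] by (simp add: W_def x_def y_def)
  qed
  have D2: "dirderiv \<i> (dirderiv \<i> u) z0 \<le> (4 * A * Q + 24 * A * y\<^sup>2) / Q ^ 4"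
  proof (rule second_deriv_max[OF \<delta>])
    show "\<And>t. \<bar>t\<bar> < \<delta> \<Longrightarrow> (\<lambda>t. u (z0 + of_real t * \<i>)) differentiable (at t)"
      by (rule line_facts(1)[OF C2 _ z0S]) (use inS in auto)
    show "(deriv (\<lambda>t. u (z0 + of_real t * \<i>)) has_real_derivative dirderiv \<i> (dirderiv \<i> u) z0) (at 0)"
      by (rule line_facts(2)[where \<delta>=\<delta>, OF C2 _ z0S]) (use inS[of _ \<i>] in auto)
    show "((\<lambda>t. A / (rho - (y + t)\<^sup>2 - x\<^sup>2)\<^sup>2) has_real_derivative
          4 * A * (y + t) / (rho - (y + t)\<^sup>2 - x\<^sup>2) ^ 3) (at t)" if "\<bar>t\<bar> < \<delta>" for t
    proof (rule barrier_d1)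
      show "rho - (y + t)\<^sup>2 - x\<^sup>2 > 0"
        using Wden[OF inb[OF that, of \<i>]] by (simp add: x_def y_def)
    qed
    have QQ: "Q = rho - y\<^sup>2 - x\<^sup>2" by (simp add: Q_def)
    show "((\<lambda>t. 4 * A * (y + t) / (rho - (y + t)\<^sup>2 - x\<^sup>2) ^ 3) has_real_derivative
          (4 * A * Q + 24 * A * y\<^sup>2) / Q ^ 4) (at 0)"
      unfolding QQ by (rule barrier_d2) (use Q in \<open>simp add: Q_def\<close>)
    show "u (z0 + of_real t * \<i>) - A / (rho - (y + t)\<^sup>2 - x\<^sup>2)\<^sup>2
          \<le> u (z0 + of_real 0 * \<i>) - A / (rho - (y + 0)\<^sup>2 - x\<^sup>2)\<^sup>2" if "\<bar>t\<bar> < \<delta>" for t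
      using mx[OF inb[OF that, of \<i>]] by (simp add: W_def x_def y_def algebra_simps)
  qed
  define U where "U = u z0"
  have WQ: "W z0 = A / Q\<^sup>2" by (simp add: W_def Q_def x_def y_def)
  have UW: "U > A / Q\<^sup>2" using phi0 d WQ by (simp add: U_def)
  have WP: "A / Q\<^sup>2 > 0" using A Q by simp
  have "U\<^sup>2 \<le> laplacian u z0"
    using pde z0S pde_lower[OF k, of U] nn UW WP by (simp add: U_def)
  also have "\<dots> \<le> (4 * A * Q + 24 * A * x\<^sup>2) / Q ^ 4 + (4 * A * Q + 24 * A * y\<^sup>2) / Q ^ 4"
    unfolding laplacian_def using D1 D2 by simp
  also have "\<dots> \<le> (A / Q\<^sup>2)\<^sup>2"
  proof -
    have "x\<^sup>2 + y\<^sup>2 \<le> rho" using Q by (simp add: Q_def)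
    hence "8 * Q + 24 * (x\<^sup>2 + y\<^sup>2) \<le> A" by (simp add: Q_def A_def)
    hence "A * (8 * Q + 24 * (x\<^sup>2 + y\<^sup>2)) \<le> A * A" using A by simp
    hence "(4 * A * Q + 24 * A * x\<^sup>2) + (4 * A * Q + 24 * A * y\<^sup>2) \<le> A * A"
      by (simp add: algebra_simps)
    hence "((4 * A * Q + 24 * A * x\<^sup>2) + (4 * A * Q + 24 * A * y\<^sup>2)) / Q ^ 4 \<le> (A * A) / Q ^ 4"
      using Q by (simp add: divide_right_mono)
    moreover have "(4 * A * Q + 24 * A * x\<^sup>2) / Q ^ 4 + (4 * A * Q + 24 * A * y\<^sup>2) / Q ^ 4
        = ((4 * A * Q + 24 * A * x\<^sup>2) + (4 * A * Q + 24 * A * y\<^sup>2)) / Q ^ 4"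
      by (simp add: add_divide_distrib)
    moreover have "(A / Q\<^sup>2)\<^sup>2 = (A * A) / Q ^ 4"
      using Q by (simp add: field_simps eval_nat_numeral)
    ultimately show ?thesis by simp
  qed
  also have "\<dots> < U\<^sup>2" using UW WP by (simp add: power_strict_mono)
  finally show False by simp
qed


theorem proposition2p12:
  fixes k :: nat
  assumes "k \<ge> 1"
  shows "\<exists>C>0. \<forall>(r::real) (u::complex \<Rightarrow> real).
           r \<ge> 1 \<longrightarrow> C2_on (ball 0 r) u \<longrightarrow> (\<forall>z\<in>ball 0 r. u z \<ge> 0) \<longrightarrow>
           (\<forall>z\<in>ball 0 r. laplacian u z = 2 * (exp (u z) - exp ((1 - real k) * u z))) \<longrightarrow>
           u 0 \<le> C / r\<^sup>2"
proof (intro exI[of _ 24] conjI allI impI)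
  fix r :: real and u :: "complex \<Rightarrow> real"
  assume r: "r \<ge> 1" and C2: "C2_on (ball 0 r) u" and nn: "\<forall>z\<in>ball 0 r. u z \<ge> 0"
    and pde: "\<forall>z\<in>ball 0 r. laplacian u z = 2 * (exp (u z) - exp ((1 - real k) * u z))"
  show "u 0 \<le> 24 / r\<^sup>2"
  proof (rule ccontr)
    assume "\<not> u 0 \<le> 24 / r\<^sup>2"
    hence u0: "u 0 > 24 / r\<^sup>2" by simp
    have r2: "r\<^sup>2 > 0" using r by simp
    have upos: "u 0 > 0" using u0 r2 by (smt (verit) divide_pos_pos)
    define s where "s = (24 / u 0 + r\<^sup>2) / 2"
    have lt: "24 / u 0 < r\<^sup>2" using u0 upos r2 by (simp add: field_simps)
    have q: "24 / u 0 > 0" using upos by simp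
    have s: "s > 24 / u 0" "s < r\<^sup>2" "s > 0" using lt q unfolding s_def by (auto simp: field_simps)
    define r' where "r' = sqrt s"
    have r'2: "r'\<^sup>2 = s" using s by (simp add: r'_def)
    have r'0: "r' > 0" using s by (simp add: r'_def)
    have "r' < sqrt (r\<^sup>2)" unfolding r'_def using s(2) by (rule real_sqrt_less_mono)
    hence "r' < r" using r by simp
    from main_bound[OF assms r'0 this C2 nn pde] have "u 0 \<le> 24 / s" using r'2 by simp
    hence "u 0 * s \<le> 24" using s by (simp add: field_simps)
    moreover have "24 < u 0 * s" using s upos by (simp add: field_simps)
    ultimately show False by simp
  qed
qed (simp)

end
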